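(* Let $(X,b)$ be a weighted graph and $V\colon X\to\mathbb R$. If $q_V$ is nonnegative, then for every $h\in C_c(X)$ with $q_V(h)=0$ the set $\{x\in X\mid h(x)\neq0\}$ is a union of connected components of $(X,b)$. In particular, if all connected components of $(X,b)$ are infinite, every such $h$ vanishes identically.
   Context: Weighted graph: $X$ countable, $b\colon X\times X\to[0,\infty)$ with $b(x,x)=0$, $b(x,y)=b(y,x)$, $\sum_y b(x,y)<\infty$ for all $x$. Connected components are equivalence classes of "connected by a finite path $x_1,\dots,x_n$ with $b(x_i,x_{i+1})>0$". $C_c(X)$ is the set of finitely supported complex functions on $X$. $q_V(f)=\frac12\sum_{x,y}b(x,y)|f(x)-f(y)|^2+\sum_x|f(x)|^2V(x)$ for $f\in C_c(X)$; $q_V$ is nonnegative if $q_V(f)\ge0$ for all $f\in C_c(X)$. *)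

theory Defs
  imports "HOL-Analysis.Analysis"
begin

text \<open>A weighted graph on a countable vertex type 'a (the vertex set X is UNIV).\<close>
definition weighted_graph :: "('a::countable \<Rightarrow> 'a \<Rightarrow> real) \<Rightarrow> bool" where
  "weighted_graph b \<longleftrightarrow>
     (\<forall>x y. b x y \<ge> 0) \<and> (\<forall>x. b x x = 0) \<and> (\<forall>x y. b x y = b y x) \<and>
     (\<forall>x. (\<lambda>y. b x y) summable_on UNIV)"

text \<open>x and y are connected: there is a finite path x = x1, ..., xn = y with b(xi,xi+1) > 0
  (the path of length one gives reflexivity).\<close>
definition graph_connected :: "('a \<Rightarrow> 'a \<Rightarrow> real) \<Rightarrow> 'a \<Rightarrow> 'a \<Rightarrow> bool" where
  "graph_connected b = (\<lambda>x y. b x y > 0)\<^sup>*\<^sup>*"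

definition component :: "('a \<Rightarrow> 'a \<Rightarrow> real) \<Rightarrow> 'a \<Rightarrow> 'a set" where
  "component b x = {y. graph_connected b x y}"

definition components :: "('a \<Rightarrow> 'a \<Rightarrow> real) \<Rightarrow> 'a set set" where
  "components b = range (component b)"

definition Cc :: "('a \<Rightarrow> complex) set" where
  "Cc = {f. finite {x. f x \<noteq> 0}}"

definition qV :: "('a \<Rightarrow> 'a \<Rightarrow> real) \<Rightarrow> ('a \<Rightarrow> real) \<Rightarrow> ('a \<Rightarrow> complex) \<Rightarrow> real" where
  "qV b V f = (1/2) * (\<Sum>\<^sub>\<infinity>(x,y)\<in>UNIV. b x y * (cmod (f x - f y))\<^sup>2)
              + (\<Sum>\<^sub>\<infinity>x\<in>UNIV. (cmod (f x))\<^sup>2 * V x)"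

definition qV_nonneg :: "('a \<Rightarrow> 'a \<Rightarrow> real) \<Rightarrow> ('a \<Rightarrow> real) \<Rightarrow> bool" where
  "qV_nonneg b V \<longleftrightarrow> (\<forall>f\<in>Cc. qV b V f \<ge> 0)"

end

theory Submission
  imports Defs
begin

lemma row_has_sum:
  assumes "(f has_sum s) UNIV"
  shows "((\<lambda>(x,y). if x = a then f y else 0) has_sum s) (UNIV::('a\<times>'b) set)"
proof -
  have inj: "inj_on (Pair a) (UNIV::'b set)" by (auto simp: inj_on_def)
  have eq: "((\<lambda>(x,y). if x = a then f y else 0) \<circ> Pair a) = f" by auto
  have "((\<lambda>(x,y). if x = a then f y else 0) has_sum s) (Pair a ` UNIV)"
    using has_sum_reindex[OF inj, of "(\<lambda>(x,y). if x = a then f y else 0)" s] eq assms by simp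
  then show ?thesis
    by (rule has_sum_cong_neutral[THEN iffD1, rotated -1]) auto
qed

lemma col_has_sum:
  assumes "(f has_sum s) UNIV"
  shows "((\<lambda>(x,y). if y = a then f x else 0) has_sum s) (UNIV::('b\<times>'a) set)"
proof -
  have "((\<lambda>(x,y). if x = a then f y else 0) has_sum s) (UNIV \<times> UNIV)"
    using row_has_sum[OF assms] by simp
  then have "((\<lambda>(x,y). (\<lambda>(x,y). if x = a then f y else 0) (y,x)) has_sum s) (UNIV \<times> UNIV)"
    using has_sum_swap by blast
  then show ?thesis by simp
qed

lemma summable_sum_fam:
  fixes g :: "'i \<Rightarrow> 'a \<Rightarrow> real"
  assumes "finite F" "\<And>i. i \<in> F \<Longrightarrow> g i summable_on A"
  shows "(\<lambda>p. \<Sum>i\<in>F. g i p) summable_on A"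
  using assms
proof (induction F rule: finite_induct)
  case empty then show ?case by simp
next
  case (insert i F)
  then show ?case by (simp add: summable_on_add)
qed

lemma E_summable:
  fixes b :: "'a::countable \<Rightarrow> 'a \<Rightarrow> real"
  assumes wg: "weighted_graph b" and f: "f \<in> Cc"
  shows "(\<lambda>(x,y). b x y * (cmod (f x - f y))\<^sup>2) summable_on UNIV"
proof -
  define F where "F = {x. f x \<noteq> 0}"
  have finF: "finite F" using f by (simp add: Cc_def F_def)
  define M where "M = (\<Sum>x\<in>F. cmod (f x))"
  have bnd: "cmod (f x) \<le> M" for x
  proof (cases "x \<in> F")
    case True
    then show ?thesis unfolding M_def using finF
      by (intro member_le_sum) auto
  next
    case False
    then show ?thesis unfolding M_def F_def by (simp add: sum_nonneg)
  qed
  have b0: "b x y \<ge> 0" "b x y = b y x" for x y using wg by (auto simp: weighted_graph_def)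
  have bs: "(\<lambda>y. b x y) summable_on UNIV" for x using wg by (auto simp: weighted_graph_def)
  define G where "G = (\<lambda>p::'a\<times>'a. \<Sum>a\<in>F. (\<lambda>(x,y). if x = a then b a y else 0) p)"
  have Gs: "G summable_on UNIV" unfolding G_def
    by (rule summable_sum_fam[OF finF]) (rule has_sum_imp_summable[OF row_has_sum[OF has_sum_infsum[OF bs]]])
  have G2s: "(\<lambda>(x,y). G (y,x)) summable_on UNIV"
    using Gs summable_on_swap[of G UNIV UNIV] by simp
  have Gval: "G (x,y) = (if x \<in> F then b x y else 0)" for x y
    unfolding G_def using finF by (simp add: sum.delta' split: if_splits)
  have sumS: "(\<lambda>p. 4*M\<^sup>2 * (G p + (\<lambda>(x,y). G (y,x)) p)) summable_on UNIV"
    by (intro summable_on_cmult_right summable_on_add Gs G2s)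
  show ?thesis
  proof (rule summable_on_comparison_test[OF sumS])
    fix p :: "'a\<times>'a"
    obtain x y where p: "p = (x,y)" by (cases p)
    have d: "cmod (f x - f y) \<le> 2*M" using norm_triangle_ineq4[of "f x" "f y"] bnd[of x] bnd[of y] by linarith
    have d2: "(cmod (f x - f y))\<^sup>2 \<le> 4*M\<^sup>2"
      using power_mono[OF d, of 2] by (simp add: power_mult_distrib)
    have "b x y * (cmod (f x - f y))\<^sup>2 \<le> 4*M\<^sup>2 * (G (x,y) + G (y,x))"
    proof (cases "x \<in> F \<or> y \<in> F")
      case True
      have "b x y * (cmod (f x - f y))\<^sup>2 \<le> b x y * (4*M\<^sup>2)" by (rule mult_left_mono[OF d2 b0(1)])
      also have "\<dots> \<le> 4*M\<^sup>2 * (G (x,y) + G (y,x))"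
      proof (cases "x \<in> F")
        case True
        have "0 \<le> G (y,x)" using b0 by (simp add: Gval)
        then show ?thesis using True by (simp add: Gval algebra_simps)
      next
        case False
        then have "y \<in> F" using \<open>x \<in> F \<or> y \<in> F\<close> by blast
        have "0 \<le> G (x,y)" using b0 by (simp add: Gval)
        then show ?thesis using \<open>y \<in> F\<close> b0(2)[of x y] by (simp add: Gval algebra_simps)
      qed
      finally show ?thesis .
    next
      case False
      then have "f x = 0" "f y = 0" by (auto simp: F_def)
      then show ?thesis using b0 by (simp add: Gval)
    qed
    then show "(\<lambda>(x,y). b x y * (cmod (f x - f y))\<^sup>2) p \<le> 4*M\<^sup>2 * (G p + (\<lambda>(x,y). G (y,x)) p)"
      by (simp add: p)
    show "0 \<le> (\<lambda>(x,y). b x y * (cmod (f x - f y))\<^sup>2) p" using b0 by (simp add: p)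
  qed
qed


lemma cmod_real_diff_sq: "(cmod (complex_of_real a - complex_of_real c))\<^sup>2 = (a - c)\<^sup>2"
  by (metis norm_of_real of_real_diff power2_abs)

lemma cmod_real_diff_sq': "cmod (complex_of_real a - complex_of_real c) * cmod (complex_of_real a - complex_of_real c) = (a - c) * (a - c)"
  using cmod_real_diff_sq[of a c] by (simp add: power2_eq_square)

lemma V_summable:
  assumes "f \<in> Cc"
  shows "(\<lambda>x. (cmod (f x))\<^sup>2 * V x) summable_on UNIV"
  by (rule finite_nonzero_values_imp_summable_on, rule finite_subset[of _ "{x. f x \<noteq> 0}"])
     (use assms in \<open>auto simp: Cc_def\<close>)

lemma key:
  fixes b :: "'a::countable \<Rightarrow> 'a \<Rightarrow> real" and V :: "'a \<Rightarrow> real"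
  assumes wg: "weighted_graph b" and nn: "qV_nonneg b V" and h: "h \<in> Cc" and q0: "qV b V h = 0"
    and hx0: "h x0 = 0" and bpos: "b x0 y0 > 0"
  shows "h y0 = 0"
proof (rule ccontr)
  assume hy0: "h y0 \<noteq> 0"
  have b0: "b x y \<ge> 0" "b x y = b y x" "b x x = 0" for x y using wg by (auto simp: weighted_graph_def)
  have bs: "(\<lambda>y. b x y) summable_on UNIV" for x using wg by (auto simp: weighted_graph_def)
  define u where "u = (\<lambda>x. cmod (h x))"
  define U where "U = (\<lambda>x. complex_of_real (u x))"
  have finh: "finite {x. h x \<noteq> 0}" using h by (simp add: Cc_def)
  have UCc: "U \<in> Cc" using finh by (simp add: Cc_def U_def u_def)
  have ux0: "u x0 = 0" using hx0 by (simp add: u_def)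
  have u0: "u x \<ge> 0" for x by (simp add: u_def)
  have Ule: "qV b V U \<le> qV b V h"
  proof -
    have "(\<Sum>\<^sub>\<infinity>(x,y)\<in>UNIV. b x y * (cmod (U x - U y))\<^sup>2) \<le> (\<Sum>\<^sub>\<infinity>(x,y)\<in>UNIV. b x y * (cmod (h x - h y))\<^sup>2)"
    proof (rule infsum_mono[OF E_summable[OF wg UCc] E_summable[OF wg h]])
      fix p :: "'a \<times> 'a"
      obtain x y where p: "p = (x,y)" by (cases p)
      have "\<bar>u x - u y\<bar> \<le> cmod (h x - h y)" unfolding u_def by (rule norm_triangle_ineq3)
      then have "(u x - u y)\<^sup>2 \<le> (cmod (h x - h y))\<^sup>2"
        by (metis abs_ge_zero power2_abs power_mono)
      then have "b x y * (u x - u y)\<^sup>2 \<le> b x y * (cmod (h x - h y))\<^sup>2"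
        by (rule mult_left_mono) (rule b0)
      then show "(\<lambda>(x,y). b x y * (cmod (U x - U y))\<^sup>2) p \<le> (\<lambda>(x,y). b x y * (cmod (h x - h y))\<^sup>2) p"
        by (simp add: p U_def cmod_real_diff_sq)
    qed
    moreover have "(\<Sum>\<^sub>\<infinity>x\<in>UNIV. (cmod (U x))\<^sup>2 * V x) = (\<Sum>\<^sub>\<infinity>x\<in>UNIV. (cmod (h x))\<^sup>2 * V x)"
      by (simp add: U_def u_def)
    ultimately show ?thesis unfolding qV_def by linarith
  qed
  have qU: "qV b V U = 0" using Ule q0 nn UCc by (auto simp: qV_nonneg_def)
  define deg where "deg = (\<Sum>\<^sub>\<infinity>y\<in>UNIV. b x0 y)"
  define S where "S = (\<Sum>\<^sub>\<infinity>y\<in>UNIV. b x0 y * u y)"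
  have Ss: "(\<lambda>y. b x0 y * u y) summable_on UNIV"
    by (rule finite_nonzero_values_imp_summable_on, rule finite_subset[OF _ finh]) (auto simp: u_def)
  have Spos: "S > 0"
  proof -
    have "sum (\<lambda>y. b x0 y * u y) {y0} \<le> S" unfolding S_def
      by (rule finite_sum_le_infsum[OF Ss]) (auto intro: mult_nonneg_nonneg b0 u0)
    moreover have "b x0 y0 * u y0 > 0" using bpos hy0 by (simp add: u_def)
    ultimately show ?thesis by simp
  qed
  define c where "c = deg + V x0"
  have formula: "qV b V (\<lambda>x. complex_of_real (u x + (if x = x0 then t else 0))) = t\<^sup>2 * c - 2 * t * S" for t
  proof -
    define w where "w = (\<lambda>x. u x + (if x = x0 then t else 0))"
    define W where "W = (\<lambda>x. complex_of_real (w x))"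
    have WCc: "W \<in> Cc"
      unfolding Cc_def
      by (rule CollectI, rule finite_subset[of _ "insert x0 {x. h x \<noteq> 0}"])
         (use finh in \<open>auto simp: W_def w_def u_def\<close>)
    define D1 where "D1 = (\<lambda>(x::'a,y::'a). if x = x0 then b x0 y * (t\<^sup>2 - 2*t*u y) else 0)"
    define D2 where "D2 = (\<lambda>(x::'a,y::'a). if y = x0 then b x x0 * (t\<^sup>2 - 2*t*u x) else 0)"
    have rowsum: "((\<lambda>y. b x0 y * (t\<^sup>2 - 2*t*u y)) has_sum (t\<^sup>2 * deg - 2 * t * S)) UNIV"
    proof -
      have a: "((\<lambda>y. t\<^sup>2 * b x0 y) has_sum (t\<^sup>2 * deg)) UNIV"
        unfolding deg_def by (rule has_sum_cmult_right, rule has_sum_infsum, rule bs)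
      have c: "((\<lambda>y. -(2*t) * (b x0 y * u y)) has_sum (-(2*t) * S)) UNIV"
        unfolding S_def by (rule has_sum_cmult_right, rule has_sum_infsum, rule Ss)
      have "((\<lambda>y. t\<^sup>2 * b x0 y + -(2*t) * (b x0 y * u y)) has_sum (t\<^sup>2 * deg + -(2*t) * S)) UNIV"
        by (rule has_sum_add[OF a c])
      then show ?thesis by (simp add: algebra_simps)
    qed
    have D1s: "(D1 has_sum (t\<^sup>2 * deg - 2 * t * S)) UNIV"
      unfolding D1_def by (rule row_has_sum[OF rowsum])
    have D2s: "(D2 has_sum (t\<^sup>2 * deg - 2 * t * S)) UNIV"
    proof -
      have "((\<lambda>(x,y). if y = x0 then b x0 x * (t\<^sup>2 - 2*t*u x) else 0) has_sum (t\<^sup>2 * deg - 2 * t * S)) UNIV"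
        by (rule col_has_sum[OF rowsum])
      moreover have "(\<lambda>(x,y). if y = x0 then b x0 x * (t\<^sup>2 - 2*t*u x) else 0) = D2"
        unfolding D2_def using b0(2) by (auto intro!: ext)
      ultimately show ?thesis by simp
    qed
    have E0: "((\<lambda>(x,y). b x y * (cmod (U x - U y))\<^sup>2) has_sum (\<Sum>\<^sub>\<infinity>(x,y)\<in>UNIV. b x y * (cmod (U x - U y))\<^sup>2)) UNIV"
      by (rule has_sum_infsum, rule E_summable[OF wg UCc])
    have Esum: "((\<lambda>p. (\<lambda>(x,y). b x y * (cmod (U x - U y))\<^sup>2) p + D1 p + D2 p) has_sum
        ((\<Sum>\<^sub>\<infinity>(x,y)\<in>UNIV. b x y * (cmod (U x - U y))\<^sup>2) + (t\<^sup>2 * deg - 2 * t * S) + (t\<^sup>2 * deg - 2 * t * S))) UNIV"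
      by (intro has_sum_add E0 D1s D2s)
    have pw: "(\<lambda>p. (\<lambda>(x,y). b x y * (cmod (U x - U y))\<^sup>2) p + D1 p + D2 p) = (\<lambda>(x,y). b x y * (cmod (W x - W y))\<^sup>2)"
    proof (rule ext)
      fix p :: "'a \<times> 'a"
      obtain x y where p: "p = (x,y)" by (cases p)
      show "(\<lambda>(x,y). b x y * (cmod (U x - U y))\<^sup>2) p + D1 p + D2 p = (\<lambda>(x,y). b x y * (cmod (W x - W y))\<^sup>2) p"
        using ux0 b0(3)[of x0] b0(2)[of x y]
        by (cases "x = x0"; cases "y = x0")
           (simp_all add: p U_def W_def w_def D1_def D2_def cmod_real_diff_sq cmod_real_diff_sq' power2_eq_square algebra_simps)
    qed
    have Eeq: "(\<Sum>\<^sub>\<infinity>(x,y)\<in>UNIV. b x y * (cmod (W x - W y))\<^sup>2) =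
        (\<Sum>\<^sub>\<infinity>(x,y)\<in>UNIV. b x y * (cmod (U x - U y))\<^sup>2) + 2 * (t\<^sup>2 * deg - 2 * t * S)"
      using Esum unfolding pw by (simp add: infsumI)
    have Vpw: "(\<lambda>x. (cmod (W x))\<^sup>2 * V x) = (\<lambda>x. (cmod (U x))\<^sup>2 * V x + (if x = x0 then t\<^sup>2 * V x0 else 0))"
      using ux0 by (auto simp: W_def U_def w_def)
    have ind: "(\<Sum>\<^sub>\<infinity>x\<in>UNIV. (if x = x0 then t\<^sup>2 * V x0 else 0)) = t\<^sup>2 * V x0"
      by (rule infsumI, rule has_sum_finite_neutralI[of "{x0}"]) auto
    have Veq: "(\<Sum>\<^sub>\<infinity>x\<in>UNIV. (cmod (W x))\<^sup>2 * V x) = (\<Sum>\<^sub>\<infinity>x\<in>UNIV. (cmod (U x))\<^sup>2 * V x) + t\<^sup>2 * V x0"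
      unfolding Vpw
      by (subst infsum_add[OF V_summable[OF UCc]])
         (auto intro: finite_nonzero_values_imp_summable_on simp: ind)
    have "qV b V W = qV b V U + t\<^sup>2 * c - 2 * t * S"
      unfolding qV_def Eeq Veq c_def by (simp add: algebra_simps)
    then show ?thesis using qU by (simp add: W_def w_def)
  qed
  define t where "t = S / (\<bar>c\<bar> + 1)"
  have tpos: "t > 0" using Spos by (simp add: t_def add_pos_nonneg)
  have "t * c \<le> t * \<bar>c\<bar>" using tpos by (simp add: mult_left_mono)
  also have "t * \<bar>c\<bar> < t * (\<bar>c\<bar> + 1)" using tpos by simp
  also have "t * (\<bar>c\<bar> + 1) = S" unfolding t_def by (simp add: add_pos_nonneg)
  finally have tc: "t * c < S" .
  have neg: "t\<^sup>2 * c - 2 * t * S < 0"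
  proof -
    have "t * c - 2 * S < 0" using tc Spos by linarith
    then have "t * (t * c - 2 * S) < 0" using tpos by (simp add: mult_pos_neg)
    then show ?thesis by (simp add: power2_eq_square algebra_simps)
  qed
  have "(\<lambda>x. complex_of_real (u x + (if x = x0 then t else 0))) \<in> Cc"
    unfolding Cc_def
    by (rule CollectI, rule finite_subset[of _ "insert x0 {x. h x \<noteq> 0}"])
       (use finh in \<open>auto simp: u_def\<close>)
  then have "qV b V (\<lambda>x. complex_of_real (u x + (if x = x0 then t else 0))) \<ge> 0"
    using nn by (simp add: qV_nonneg_def)
  then show False using formula[of t] neg by simp
qed


lemma supp_closed:
  fixes b :: "'a::countable \<Rightarrow> 'a \<Rightarrow> real" and V :: "'a \<Rightarrow> real"
  assumes wg: "weighted_graph b" and nn: "qV_nonneg b V" and h: "h \<in> Cc" and q0: "qV b V h = 0"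
    and hx: "h x \<noteq> 0" and conn: "graph_connected b x y"
  shows "h y \<noteq> 0"
  using conn[unfolded graph_connected_def]
proof (induction rule: rtranclp_induct)
  case base then show ?case using hx .
next
  case (step y z)
  have "b z y > 0" using step.hyps(2) wg by (simp add: weighted_graph_def)
  then show ?case using key[OF wg nn h q0, of z y] step.IH by blast
qed

theorem lemma4p4:
  fixes b :: "'a::countable \<Rightarrow> 'a \<Rightarrow> real" and V :: "'a \<Rightarrow> real"
  assumes "weighted_graph b" and "qV_nonneg b V"
  shows "(\<forall>h\<in>Cc. qV b V h = 0 \<longrightarrow>
           (\<exists>\<C>\<subseteq>components b. {x. h x \<noteq> 0} = \<Union>\<C>)) \<and>
         ((\<forall>C\<in>components b. infinite C) \<longrightarrow>
           (\<forall>h\<in>Cc. qV b V h = 0 \<longrightarrow> h = (\<lambda>_. 0)))"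
proof -
  have sub: "component b x \<subseteq> {x. h x \<noteq> 0}" if "h \<in> Cc" "qV b V h = 0" "h x \<noteq> 0" for h x
    using supp_closed[OF assms that] by (auto simp: component_def)
  have self: "x \<in> component b x" for x by (simp add: component_def graph_connected_def)
  have A: "\<exists>\<C>\<subseteq>components b. {x. h x \<noteq> 0} = \<Union>\<C>" if "h \<in> Cc" "qV b V h = 0" for h
  proof (intro exI conjI)
    show "component b ` {x. h x \<noteq> 0} \<subseteq> components b" by (auto simp: components_def)
    show "{x. h x \<noteq> 0} = \<Union> (component b ` {x. h x \<noteq> 0})"
    proof
      show "{x. h x \<noteq> 0} \<subseteq> \<Union> (component b ` {x. h x \<noteq> 0})"
        using self by blast
      show "\<Union> (component b ` {x. h x \<noteq> 0}) \<subseteq> {x. h x \<noteq> 0}"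
        using sub[OF that] by (simp add: UN_subset_iff)
    qed
  qed
  moreover have "h = (\<lambda>_. 0)" if inf: "\<forall>C\<in>components b. infinite C" and "h \<in> Cc" "qV b V h = 0" for h
  proof (rule ccontr)
    assume "h \<noteq> (\<lambda>_. 0)"
    then obtain x where hx: "h x \<noteq> 0" by auto
    have "finite {x. h x \<noteq> 0}" using that(2) by (simp add: Cc_def)
    then have "finite (component b x)" by (rule finite_subset[OF sub[OF that(2,3) hx]])
    moreover have "component b x \<in> components b" by (simp add: components_def)
    ultimately show False using inf by auto
  qed
  ultimately show ?thesis by (intro conjI ballI impI) auto
qed

end
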